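(* Let $k\ge1$ and let $\hat x,z,v\in\mathcal X$ be arbitrary. Run Prox-step$(\hat x,z,v,\gamma,\alpha,\zeta,\epsilon)$ with $$\gamma=\frac{3}{k+2},\quad \alpha=\frac{6\kappa L}{k+1},\quad \zeta=\frac{LD_{\mathcal X}^2}{384k(k+1)},\quad \epsilon=\frac{\kappa L D_{\mathcal X}^2}{k(k+1)(k+2)}.$$ Then the output $(x_R,y_R,v_R)$ satisfies $f(x_R,y_R)\ge\max_{y\in\mathcal Y}f(x_R,y)-\epsilon$.
   Context: Standing assumptions: $\mathcal X\subseteq\mathbb R^p$, $\mathcal Y\subseteq\mathbb R^q$ are nonempty convex compact sets with (Euclidean) diameters $D_{\mathcal X},D_{\mathcal Y}$. $f:\mathcal X\times\mathcal Y\to\mathbb R$ is continuously differentiable (on an open set containing $\mathcal X\times\mathcal Y$) and satisfies: (i) $L$-smoothness: $\|\nabla f(x_1,y_1)-\nabla f(x_2,y_2)\|^2\le L^2(\|x_1-x_2\|^2+\|y_1-y_2\|^2)$; (ii) $f(\cdot,y)$ convex for every $y$; (iii) $f(x,\cdot)$ $\mu$-strongly concave for every $x$, $\mu>0$. Set $\kappa=L/\mu$. Procedure CndG$(r,q,\beta,\eta,\Omega)$ (for a vector $r$, a point $q\in\Omega$, $\beta>0$, $\eta>0$, convex compact $\Omega$): set $q_1=q$; for $t=1,2,\dots$: let $p_t\in\arg\max_{x\in\Omega}\langle r+\beta(q_t-q),q_t-x\rangle$ and $\tau_t=\langle r+\beta(q_t-q),q_t-p_t\rangle$; if $\tau_t\le\eta$,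 return $q^+=q_t$; otherwise set $\theta_t=\min\{1,\tau_t/(\beta\|q_t-p_t\|^2)\}$ and $q_{t+1}=(1-\theta_t)q_t+\theta_t p_t$. (Its output satisfies $\max_{x\in\Omega}\langle r+\beta(q^+-q),q^+-x\rangle\le\eta$.) Procedure Prox-step$(\hat x,z,v,\gamma,\alpha,\zeta,\epsilon)$ with $\hat x,z,v\in\mathcal X$: set $\epsilon_{cgs}=\epsilon/(64\kappa)$, $\epsilon_{mp}=4\gamma\sqrt{2\kappa L\epsilon_{cgs}/\alpha^2+2\zeta/\alpha}$, $R=\lceil\log_2(4D_{\mathcal X}/\epsilon_{mp})\rceil$, $x_0=\hat x$. For $r=1,\dots,R$: choose any $y_r\in\mathcal Y$ with $f(x_{r-1},y_r)\ge\max_{y\in\mathcal Y}f(x_{r-1},y)-\epsilon_{cgs}$ (in the paper computed by the conditional gradient sliding method); set $v_r=\mathrm{CndG}(\nabla_x f(z,y_r),v,\alpha,\zeta,\mathcal X)$ and $x_r=(1-\gamma)\hat x+\gamma v_r$. Return $(x_R,y_R,v_R)$. *)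

theory Defs
  imports "HOL-Analysis.Analysis"
begin

definition strongly_concave_on :: "real \<Rightarrow> 'b::real_normed_vector set \<Rightarrow> ('b \<Rightarrow> real) \<Rightarrow> bool" where
  "strongly_concave_on \<mu> S g \<longleftrightarrow>
     (\<forall>y1\<in>S. \<forall>y2\<in>S. \<forall>t::real. 0 \<le> t \<and> t \<le> 1 \<longrightarrow>
        g ((1 - t) *\<^sub>R y1 + t *\<^sub>R y2) \<ge>
          (1 - t) * g y1 + t * g y2 + \<mu> / 2 * t * (1 - t) * (norm (y1 - y2))\<^sup>2)"

definition cndg_val :: "'a::real_inner \<Rightarrow> 'a \<Rightarrow> real \<Rightarrow> 'a \<Rightarrow> 'a \<Rightarrow> real" where
  "cndg_val r q \<beta> qt x = inner (r + \<beta> *\<^sub>R (qt - q)) (qt - x)"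

text \<open>out is a possible output of CndG(r,q,beta,eta,Omega): there is a terminating run
  q_1 = q, ..., q_T (with linear-oracle answers p_1, ..., p_T) following the rules of
  the procedure, and out = q_T.  The choice of p_t in the argmax is arbitrary.\<close>
definition cndg_output :: "'a::real_inner \<Rightarrow> 'a \<Rightarrow> real \<Rightarrow> real \<Rightarrow> 'a set \<Rightarrow> 'a \<Rightarrow> bool" where
  "cndg_output r q \<beta> \<eta> \<Omega> out \<longleftrightarrow>
     (\<exists>T::nat. \<exists>qs ps. T \<ge> 1 \<and> qs 1 = q \<and>
        (\<forall>t\<in>{1..T}. ps t \<in> \<Omega> \<and> (\<forall>x\<in>\<Omega>. cndg_val r q \<beta> (qs t) x \<le> cndg_val r q \<beta> (qs t) (ps t))) \<and>
        (\<forall>t\<in>{1..<T}. cndg_val r q \<beta> (qs t) (ps t) > \<eta> \<and>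
           (let \<tau> = cndg_val r q \<beta> (qs t) (ps t);
                \<theta> = min 1 (\<tau> / (\<beta> * (norm (qs t - ps t))\<^sup>2))
            in qs (Suc t) = (1 - \<theta>) *\<^sub>R qs t + \<theta> *\<^sub>R ps t)) \<and>
        cndg_val r q \<beta> (qs T) (ps T) \<le> \<eta> \<and>
        out = qs T)"

text \<open>out is a possible output (x_R, y_R, v_R) of Prox-step(xh,z,v,gamma,alpha,zeta,eps),
  where gx is the partial gradient of f in x, kappa = L / mu, and each y_r is any
  eps_cgs-approximate maximizer of f(x_{r-1}, .) over Y.  The procedure returns
  (x_R, y_R, v_R), which presupposes R >= 1.\<close>
definition prox_step_output ::
  "'a::euclidean_space set \<Rightarrow> 'b::euclidean_space set \<Rightarrow> ('a \<Rightarrow> 'b \<Rightarrow> real) \<Rightarrow> ('a \<Rightarrow> 'b \<Rightarrow> 'a)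
   \<Rightarrow> real \<Rightarrow> real \<Rightarrow> 'a \<Rightarrow> 'a \<Rightarrow> 'a \<Rightarrow> real \<Rightarrow> real \<Rightarrow> real \<Rightarrow> real \<Rightarrow> 'a \<times> 'b \<times> 'a \<Rightarrow> bool" where
  "prox_step_output X Y f gx L \<mu> xh z v \<gamma> \<alpha> \<zeta> \<epsilon> out \<longleftrightarrow>
     (let \<kappa> = L / \<mu>;
          ecgs = \<epsilon> / (64 * \<kappa>);
          emp = 4 * \<gamma> * sqrt (2 * \<kappa> * L * ecgs / \<alpha>\<^sup>2 + 2 * \<zeta> / \<alpha>);
          R = nat \<lceil>log 2 (4 * diameter X / emp)\<rceil>
      in R \<ge> 1 \<and>
         (\<exists>xs ys vs. xs 0 = xh \<and>
            (\<forall>r\<in>{1..R}.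
               ys r \<in> Y \<and> f (xs (r - 1)) (ys r) \<ge> (SUP y\<in>Y. f (xs (r - 1)) y) - ecgs \<and>
               cndg_output (gx z (ys r)) v \<alpha> \<zeta> X (vs r) \<and>
               xs r = (1 - \<gamma>) *\<^sub>R xh + \<gamma> *\<^sub>R vs r) \<and>
            out = (xs R, ys R, vs R)))"

end

theory Submission
  imports Defs
begin

lemma line_deriv:
  fixes F :: "'a::euclidean_space \<Rightarrow> 'b::euclidean_space \<Rightarrow> real"
  assumes "((\<lambda>(a,b). F a b) has_derivative (\<lambda>(h,l). inner G1 h + inner G2 l)) (at (p0 + t *\<^sub>R dx, q0 + t *\<^sub>R dy))"
  shows "((\<lambda>s. F (p0 + s *\<^sub>R dx) (q0 + s *\<^sub>R dy)) has_real_derivative (inner G1 dx + inner G2 dy)) (at t)"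
proof -
  have g: "((\<lambda>s. (p0 + s *\<^sub>R dx, q0 + s *\<^sub>R dy)) has_derivative (\<lambda>s. (s *\<^sub>R dx, s *\<^sub>R dy))) (at t)"
    by (auto intro!: derivative_eq_intros)
  have "((\<lambda>s. (\<lambda>(a,b). F a b) (p0 + s *\<^sub>R dx, q0 + s *\<^sub>R dy)) has_derivative
      (\<lambda>s. (\<lambda>(h,l). inner G1 h + inner G2 l) (s *\<^sub>R dx, s *\<^sub>R dy))) (at t)"
    using has_derivative_compose[OF g assms] by (simp add: o_def)
  moreover have "(\<lambda>s. (\<lambda>(h,l). inner G1 h + inner G2 l) (s *\<^sub>R dx, s *\<^sub>R dy)) = (*) (inner G1 dx + inner G2 dy)"
    by (auto simp: fun_eq_iff algebra_simps)
  ultimately show ?thesis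
    by (simp add: has_field_derivative_def)
qed

lemma cndg_props:
  fixes \<Omega> :: "'a::real_inner set"
  assumes "cndg_output r q \<beta> \<eta> \<Omega> out" "convex \<Omega>" "q \<in> \<Omega>" "\<beta> > 0" "\<eta> > 0"
  shows "out \<in> \<Omega> \<and> (\<forall>x\<in>\<Omega>. cndg_val r q \<beta> out x \<le> \<eta>)"
proof -
  obtain T qs ps where T: "T \<ge> 1" "qs 1 = q"
    and P: "\<forall>t\<in>{1..T}. ps t \<in> \<Omega> \<and> (\<forall>x\<in>\<Omega>. cndg_val r q \<beta> (qs t) x \<le> cndg_val r q \<beta> (qs t) (ps t))"
    and S: "\<forall>t\<in>{1..<T}. cndg_val r q \<beta> (qs t) (ps t) > \<eta> \<and>
           (let \<tau> = cndg_val r q \<beta> (qs t) (ps t);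
                \<theta> = min 1 (\<tau> / (\<beta> * (norm (qs t - ps t))\<^sup>2))
            in qs (Suc t) = (1 - \<theta>) *\<^sub>R qs t + \<theta> *\<^sub>R ps t)"
    and F: "cndg_val r q \<beta> (qs T) (ps T) \<le> \<eta>" "out = qs T"
    using assms(1) unfolding cndg_output_def by blast
  have mem: "1 \<le> t \<Longrightarrow> t \<le> T \<Longrightarrow> qs t \<in> \<Omega>" for t
  proof (induction t)
    case 0 then show ?case by simp
  next
    case (Suc t)
    show ?case
    proof (cases "t = 0")
      case True then show ?thesis using T assms(3) by simp
    next
      case False
      then have t: "t \<in> {1..<T}" "t \<in> {1..T}" using Suc by auto
      define \<tau> where "\<tau> = cndg_val r q \<beta> (qs t) (ps t)"
      define \<theta> where "\<theta> = min 1 (\<tau> / (\<beta> * (norm (qs t - ps t))\<^sup>2))"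
      have "\<tau> > \<eta>" using S t unfolding \<tau>_def by blast
      then have "0 \<le> \<theta>" "\<theta> \<le> 1" unfolding \<theta>_def using assms(4,5) by auto
      moreover have "qs (Suc t) = (1 - \<theta>) *\<^sub>R qs t + \<theta> *\<^sub>R ps t"
        using S t unfolding \<tau>_def \<theta>_def Let_def by blast
      moreover have "qs t \<in> \<Omega>" using Suc False by auto
      moreover have "ps t \<in> \<Omega>" using P t by blast
      ultimately show ?thesis using convexD_alt[OF assms(2)] by metis
    qed
  qed
  show ?thesis using mem[of T] T P F by force
qed

lemma quad_bound:
  fixes u G c \<alpha> \<zeta> :: real
  assumes "\<alpha> > 0" "\<zeta> \<ge> 0" "u \<ge> 0" "G \<ge> 0" "\<alpha> * u\<^sup>2 \<le> 2 * \<zeta> + G * u"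
  shows "u \<le> G / \<alpha> + sqrt (2 * \<zeta> / \<alpha>)"
proof (rule ccontr)
  define c where "c = sqrt (2 * \<zeta> / \<alpha>)"
  have c0: "c \<ge> 0" and cc: "c * c = 2 * \<zeta> / \<alpha>" using assms unfolding c_def
    by (auto simp: real_sqrt_mult_self)
  assume "\<not> u \<le> G / \<alpha> + sqrt (2 * \<zeta> / \<alpha>)"
  then have h: "u - G / \<alpha> > c" unfolding c_def by simp
  have h2: "u > c" using h assms by (smt (verit) divide_nonneg_pos)
  have u0: "u > 0" using h2 c0 by linarith
  have "u * (u - G / \<alpha>) > c * c" using mult_strict_mono[OF h2 h] c0 u0 by simp
  then have "\<alpha> * (u * (u - G / \<alpha>)) > \<alpha> * (c * c)" using assms(1) by simp
  moreover have "\<alpha> * (u * (u - G / \<alpha>)) = \<alpha> * u\<^sup>2 - G * u" using assms(1)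
    by (simp add: algebra_simps power2_eq_square)
  moreover have "\<alpha> * (c * c) = 2 * \<zeta>" using cc assms(1) by simp
  ultimately show False using assms(5) by linarith
qed


lemma alg1: fixes K \<kappa> \<mu> D A B :: real assumes "K>0" "\<kappa>>0" "\<mu>>0" "A > 0" "B > 0"
  shows "(\<kappa>*\<mu>)\<^sup>2 * (2 * (\<kappa>*(\<kappa>*\<mu>)*D\<^sup>2/(K*A*B)/(64*\<kappa>))/\<mu>) / (6*\<kappa>*(\<kappa>*\<mu>)/A)\<^sup>2
     = D\<^sup>2/(1152*\<kappa>*K) * (A/B)"
  using assms by (simp add: field_simps power2_eq_square)

lemma alg2: fixes K \<kappa> \<mu> D A :: real assumes "K>0" "\<kappa>>0" "\<mu>>0" "A > 0"
  shows "2 * ((\<kappa>*\<mu>) * D\<^sup>2 / (384 * K * A)) / (6*\<kappa>*(\<kappa>*\<mu>)/A) = D\<^sup>2/(1152*\<kappa>*K)"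
  using assms by (simp add: field_simps power2_eq_square)

lemma alg3: fixes \<kappa> \<mu> e a :: real assumes "\<mu>>0"
  shows "(\<kappa>*\<mu>)\<^sup>2 * (2 * e / \<mu>) / a\<^sup>2 = 2 * \<kappa> * (\<kappa>*\<mu>) * e / a\<^sup>2"
  using assms by (simp add: field_simps power2_eq_square)

lemma alg4: fixes K \<kappa> L D A B :: real assumes "K>0" "\<kappa>>0" "L>0" "A > 0" "B > 0"
  shows "6 * (\<kappa>*L*D\<^sup>2/(K*A*B) / (64*\<kappa>)) + 3/5*(\<kappa>*L*(81*(3/B)\<^sup>2*(D\<^sup>2/(1152*\<kappa>*K))))
     = (L*D\<^sup>2)/(K*A*B\<^sup>2) * (6*B/64 + 2187/5760*A)"
    "\<kappa>*L*D\<^sup>2/(K*A*B) = (L*D\<^sup>2)/(K*A*B\<^sup>2) * (\<kappa>*B)"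
  using assms by (simp_all add: field_simps power2_eq_square)

lemma num: fixes K \<kappa> L D :: real assumes "K \<ge> 1" "\<kappa> \<ge> 1/2" "L>0" "D > 0"
  shows "6 * (\<kappa>*L*D\<^sup>2/(K*(K+1)*(K+2)) / (64*\<kappa>)) + 3/5*(\<kappa>*L*(81*(3/(K+2))\<^sup>2*(D\<^sup>2/(1152*\<kappa>*K))))
     \<le> \<kappa>*L*D\<^sup>2/(K*(K+1)*(K+2))"
proof -
  have p: "K > 0" "\<kappa> > 0" "K + 1 > 0" "K + 2 > 0" using assms by auto
  have "6*(K+2)/64 + 2187/5760*(K+1) \<le> \<kappa>*(K+2)"
  proof -
    have "(1/2)*(K+2) \<le> \<kappa>*(K+2)" using assms p by (intro mult_right_mono) auto
    then show ?thesis using assms by (simp add: field_simps)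
  qed
  moreover have "(L*D\<^sup>2)/(K*(K+1)*(K+2)\<^sup>2) \<ge> 0" using p assms by simp
  ultimately have "(L*D\<^sup>2)/(K*(K+1)*(K+2)\<^sup>2) * (6*(K+2)/64 + 2187/5760*(K+1)) \<le> (L*D\<^sup>2)/(K*(K+1)*(K+2)\<^sup>2) * (\<kappa>*(K+2))"
    by (intro mult_left_mono)
  then show ?thesis unfolding alg4(1)[OF p(1,2) assms(3) p(3,4)] alg4(2)[OF p(1,2) assms(3) p(3,4), symmetric] .
qed

lemma amgm1: fixes \<kappa> \<mu> \<delta> s :: real assumes "\<mu> > 0"
  shows "(\<kappa>*\<mu>) * \<delta> * s - \<mu> / 2 * s\<^sup>2 \<le> \<kappa> * (\<kappa>*\<mu>) * \<delta>\<^sup>2 / 2"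
proof -
  have "0 \<le> \<mu> / 2 * (\<kappa> * \<delta> - s)\<^sup>2" using assms by simp
  then show ?thesis by (simp add: power2_eq_square algebra_simps)
qed

lemma amgm2: fixes \<kappa> \<mu> \<delta> q :: real assumes "\<mu> > 0"
  shows "(\<kappa>*\<mu>) * \<delta> * q \<le> \<kappa> * (\<kappa>*\<mu>) * \<delta>\<^sup>2 / 10 + 5 * (\<mu> * q\<^sup>2 / 2)"
proof -
  have "0 \<le> \<mu> / 10 * (\<kappa> * \<delta> - 5 * q)\<^sup>2" using assms by simp
  then show ?thesis by (simp add: power2_eq_square algebra_simps)
qed

theorem lemma3:
  fixes X :: "'a::euclidean_space set" and Y :: "'b::euclidean_space set"
    and f :: "'a \<Rightarrow> 'b \<Rightarrow> real" and gx :: "'a \<Rightarrow> 'b \<Rightarrow> 'a" and gy :: "'a \<Rightarrow> 'b \<Rightarrow> 'b"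
    and U :: "('a \<times> 'b) set"
    and L \<mu> :: real and k :: nat and xh z v :: 'a
    and xR :: 'a and yR :: 'b and vR :: 'a
  assumes X: "convex X" "compact X" "X \<noteq> {}"
    and Y: "convex Y" "compact Y" "Y \<noteq> {}"
    and U: "open U" "X \<times> Y \<subseteq> U"
    and grad: "\<And>x y. (x, y) \<in> U \<Longrightarrow>
        ((\<lambda>(a, b). f a b) has_derivative (\<lambda>(h, l). inner (gx x y) h + inner (gy x y) l)) (at (x, y))"
    and grad_cont: "continuous_on U (\<lambda>(x, y). (gx x y, gy x y))"
    and L_pos: "L > 0"
    and smooth: "\<And>x1 y1 x2 y2. x1 \<in> X \<Longrightarrow> y1 \<in> Y \<Longrightarrow> x2 \<in> X \<Longrightarrow> y2 \<in> Y \<Longrightarrow>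
        (norm (gx x1 y1 - gx x2 y2))\<^sup>2 + (norm (gy x1 y1 - gy x2 y2))\<^sup>2
          \<le> L\<^sup>2 * ((norm (x1 - x2))\<^sup>2 + (norm (y1 - y2))\<^sup>2)"
    and cvx: "\<And>y. y \<in> Y \<Longrightarrow> convex_on X (\<lambda>x. f x y)"
    and mu_pos: "\<mu> > 0"
    and scv: "\<And>x. x \<in> X \<Longrightarrow> strongly_concave_on \<mu> Y (f x)"
    and k: "k \<ge> 1"
    and pts: "xh \<in> X" "z \<in> X" "v \<in> X"
    and run: "prox_step_output X Y f gx L \<mu> xh z v
        (3 / (real k + 2))
        (6 * (L / \<mu>) * L / (real k + 1))
        (L * (diameter X)\<^sup>2 / (384 * real k * (real k + 1)))
        ((L / \<mu>) * L * (diameter X)\<^sup>2 / (real k * (real k + 1) * (real k + 2)))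
        (xR, yR, vR)"
  shows "f xR yR \<ge> (SUP y\<in>Y. f xR y) - (L / \<mu>) * L * (diameter X)\<^sup>2 / (real k * (real k + 1) * (real k + 2))"
proof -
  have gxL: "norm (gx x y1 - gx x y2) \<le> L * norm (y1 - y2)"
    if "x \<in> X" "y1 \<in> Y" "y2 \<in> Y" for x y1 y2
  proof -
    have s: "(norm (gx x y1 - gx x y2))\<^sup>2 + (norm (gy x y1 - gy x y2))\<^sup>2 \<le> L\<^sup>2 * ((norm (x - x))\<^sup>2 + (norm (y1 - y2))\<^sup>2)"
      by (rule smooth[OF that(1,2) that(1,3)])
    have "(norm (gx x y1 - gx x y2))\<^sup>2 \<le> L\<^sup>2 * (norm (y1 - y2))\<^sup>2"
    proof -
      have z: "0 \<le> (norm (gy x y1 - gy x y2))\<^sup>2" by simp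
      have "(norm (gx x y1 - gx x y2))\<^sup>2 + (norm (gy x y1 - gy x y2))\<^sup>2 \<le> L\<^sup>2 * (norm (y1 - y2))\<^sup>2"
        using s by (simp only: diff_self norm_zero power_zero_numeral add_0_left)
      then show ?thesis using z by linarith
    qed
    then have "(norm (gx x y1 - gx x y2))\<^sup>2 \<le> (L * norm (y1 - y2))\<^sup>2"
      by (simp add: power_mult_distrib)
    then show ?thesis by (rule power2_le_imp_le) (use L_pos in simp)
  qed
  have gyL: "norm (gy x y1 - gy x y2) \<le> L * norm (y1 - y2)"
    if "x \<in> X" "y1 \<in> Y" "y2 \<in> Y" for x y1 y2
  proof -
    have s: "(norm (gx x y1 - gx x y2))\<^sup>2 + (norm (gy x y1 - gy x y2))\<^sup>2 \<le> L\<^sup>2 * ((norm (x - x))\<^sup>2 + (norm (y1 - y2))\<^sup>2)"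
      by (rule smooth[OF that(1,2) that(1,3)])
    have "(norm (gy x y1 - gy x y2))\<^sup>2 \<le> L\<^sup>2 * (norm (y1 - y2))\<^sup>2"
    proof -
      have z: "0 \<le> (norm (gx x y1 - gx x y2))\<^sup>2" by simp
      have "(norm (gx x y1 - gx x y2))\<^sup>2 + (norm (gy x y1 - gy x y2))\<^sup>2 \<le> L\<^sup>2 * (norm (y1 - y2))\<^sup>2"
        using s by (simp only: diff_self norm_zero power_zero_numeral add_0_left)
      then show ?thesis using z by linarith
    qed
    then have "(norm (gy x y1 - gy x y2))\<^sup>2 \<le> (L * norm (y1 - y2))\<^sup>2"
      by (simp add: power_mult_distrib)
    then show ?thesis by (rule power2_le_imp_le) (use L_pos in simp)
  qed
  have mixed: "(f x' y1 - f x y1) - (f x' y2 - f x y2) \<le> L * norm (y1 - y2) * norm (x' - x)"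
    if xx: "x \<in> X" "x' \<in> X" and yy: "y1 \<in> Y" "y2 \<in> Y" for x x' y1 y2
  proof -
    define p where "p s = x + s *\<^sub>R (x' - x)" for s
    have pX: "p s \<in> X" if "0 \<le> s" "s \<le> 1" for s
    proof -
      have "(1 - s) *\<^sub>R x + s *\<^sub>R x' \<in> X" using convexD_alt[OF X(1) xx that] .
      moreover have "(1 - s) *\<^sub>R x + s *\<^sub>R x' = p s" unfolding p_def by (simp add: algebra_simps)
      ultimately show ?thesis by simp
    qed
    define h where "h s = f (x + s *\<^sub>R (x' - x)) (y1 + s *\<^sub>R 0) - f (x + s *\<^sub>R (x' - x)) (y2 + s *\<^sub>R 0)" for s
    define h' where "h' s = (inner (gx (p s) y1) (x' - x) + inner (gy (p s) y1) 0)
       - (inner (gx (p s) y2) (x' - x) + inner (gy (p s) y2) 0)" for s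
    have D: "(h has_real_derivative h' s) (at s)" if "0 \<le> s" "s \<le> 1" for s
    proof -
      have u1: "(p s, y1) \<in> U" "(p s, y2) \<in> U" using pX[OF that] yy U(2) by auto
      have d1: "((\<lambda>s. f (x + s *\<^sub>R (x' - x)) (y1 + s *\<^sub>R 0)) has_real_derivative
          (inner (gx (p s) y1) (x' - x) + inner (gy (p s) y1) 0)) (at s)"
        by (rule line_deriv) (use grad[OF u1(1)] in \<open>simp add: p_def\<close>)
      have d2: "((\<lambda>s. f (x + s *\<^sub>R (x' - x)) (y2 + s *\<^sub>R 0)) has_real_derivative
          (inner (gx (p s) y2) (x' - x) + inner (gy (p s) y2) 0)) (at s)"
        by (rule line_deriv) (use grad[OF u1(2)] in \<open>simp add: p_def\<close>)
      show ?thesis unfolding h_def h'_def using DERIV_diff[OF d1 d2] by simp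
    qed
    obtain \<xi> where \<xi>: "0 < \<xi>" "\<xi> < 1" "h 1 - h 0 = (1 - 0) * h' \<xi>"
      using MVT2[of 0 1 h h'] D by auto
    have "h' \<xi> = inner (gx (p \<xi>) y1 - gx (p \<xi>) y2) (x' - x)" unfolding h'_def
      by (simp add: inner_diff_left)
    also have "\<dots> \<le> norm (gx (p \<xi>) y1 - gx (p \<xi>) y2) * norm (x' - x)" by (rule norm_cauchy_schwarz)
    also have "\<dots> \<le> L * norm (y1 - y2) * norm (x' - x)"
      using gxL[OF pX yy] \<xi> by (intro mult_right_mono) auto
    finally show ?thesis using \<xi> unfolding h_def by simp
  qed
  have mu2L: "\<mu> \<le> 2 * L" if xX: "x \<in> X" and yy: "y1 \<in> Y" "y2 \<in> Y" and ne: "y1 \<noteq> y2" for x y1 y2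
  proof -
    define w where "w = y2 - y1"
    define q where "q s = y1 + s *\<^sub>R w" for s
    have qY: "q s \<in> Y" if "0 \<le> s" "s \<le> 1" for s
    proof -
      have "(1 - s) *\<^sub>R y1 + s *\<^sub>R y2 \<in> Y" using convexD_alt[OF Y(1) yy that] .
      moreover have "(1 - s) *\<^sub>R y1 + s *\<^sub>R y2 = q s" unfolding q_def w_def by (simp add: algebra_simps)
      ultimately show ?thesis by simp
    qed
    define h where "h s = f (x + s *\<^sub>R 0) (y1 + s *\<^sub>R w)" for s
    define h' where "h' s = inner (gx x (q s)) 0 + inner (gy x (q s)) w" for s
    have D: "(h has_real_derivative h' s) (at s)" if "0 \<le> s" "s \<le> 1" for s
    proof -
      have u1: "(x, q s) \<in> U" using qY[OF that] xX U(2) by auto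
      show ?thesis unfolding h_def h'_def
        by (rule line_deriv) (use grad[OF u1] in \<open>simp add: q_def\<close>)
    qed
    obtain \<xi>1 where \<xi>1: "0 < \<xi>1" "\<xi>1 < 1/2" "h (1/2) - h 0 = (1/2 - 0) * h' \<xi>1"
      using MVT2[of 0 "1/2" h h'] D by auto
    obtain \<xi>2 where \<xi>2: "1/2 < \<xi>2" "\<xi>2 < 1" "h 1 - h (1/2) = (1 - 1/2) * h' \<xi>2"
      using MVT2[of "1/2" 1 h h'] D by auto
    have "h' \<xi>1 - h' \<xi>2 = inner (gy x (q \<xi>1) - gy x (q \<xi>2)) w" unfolding h'_def
      by (simp add: inner_diff_left)
    also have "\<dots> \<le> norm (gy x (q \<xi>1) - gy x (q \<xi>2)) * norm w" by (rule norm_cauchy_schwarz)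
    also have "\<dots> \<le> L * norm (q \<xi>1 - q \<xi>2) * norm w"
      using gyL[OF xX qY qY] \<xi>1 \<xi>2 by (intro mult_right_mono) auto
    also have "norm (q \<xi>1 - q \<xi>2) = (\<xi>2 - \<xi>1) * norm w"
    proof -
      have "q \<xi>1 - q \<xi>2 = (\<xi>1 - \<xi>2) *\<^sub>R w" unfolding q_def by (simp add: algebra_simps)
      then show ?thesis using \<xi>1 \<xi>2 by simp
    qed
    also have "L * ((\<xi>2 - \<xi>1) * norm w) * norm w \<le> L * (norm w)\<^sup>2"
    proof -
      have "(\<xi>2 - \<xi>1) * (norm w * norm w) \<le> 1 * (norm w * norm w)"
        using \<xi>1 \<xi>2 by (intro mult_right_mono) auto
      then show ?thesis using L_pos by (simp add: power2_eq_square mult.assoc)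
    qed
    finally have A: "h' \<xi>1 - h' \<xi>2 \<le> L * (norm w)\<^sup>2" .
    have sc: "f x ((1 - 1/2) *\<^sub>R y1 + (1/2) *\<^sub>R y2) \<ge>
          (1 - 1/2) * f x y1 + (1/2) * f x y2 + \<mu> / 2 * (1/2) * (1 - 1/2) * (norm (y1 - y2))\<^sup>2"
    proof -
      have sc0: "\<forall>t::real. 0 \<le> t \<and> t \<le> 1 \<longrightarrow> f x ((1 - t) *\<^sub>R y1 + t *\<^sub>R y2) \<ge>
          (1 - t) * f x y1 + t * f x y2 + \<mu> / 2 * t * (1 - t) * (norm (y1 - y2))\<^sup>2"
        using scv[OF xX] yy unfolding strongly_concave_on_def by blast
      show ?thesis by (rule sc0[rule_format]) simp
    qed
    have e1: "(1 - 1/2) *\<^sub>R y1 + (1/2) *\<^sub>R y2 = y1 + (1/2) *\<^sub>R w"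
    proof -
      have hh: "(1/2::real) *\<^sub>R y1 + (1/2) *\<^sub>R y1 = y1" by (simp flip: scaleR_add_left)
      show ?thesis unfolding w_def using hh by (simp add: algebra_simps)
    qed
    have hv: "h 0 = f x y1" "h 1 = f x y2" "h (1/2) = f x (y1 + (1/2) *\<^sub>R w)" unfolding h_def w_def by auto
    have nw: "norm (y1 - y2) = norm w" unfolding w_def by (simp add: norm_minus_commute)
    have "\<mu> * (norm w)\<^sup>2 \<le> (2 * L) * (norm w)\<^sup>2"
      using sc e1 hv nw \<xi>1(3) \<xi>2(3) A by (simp add: algebra_simps)
    moreover have "(norm w)\<^sup>2 > 0" using ne unfolding w_def by simp
    ultimately show ?thesis by (simp add: mult_le_cancel_right_pos)
  qed
  have fc2: "continuous_on (X \<times> Y) (\<lambda>(a,b). f a b)"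
  proof (rule continuous_at_imp_continuous_on, clarify)
    fix a b assume "a \<in> X" "b \<in> Y"
    then have "(a, b) \<in> U" using U(2) by auto
    from has_derivative_continuous[OF grad[OF this]] show "isCont (\<lambda>(a,b). f a b) (a, b)" .
  qed
  have fcont: "continuous_on Y (f x)" if "x \<in> X" for x
  proof -
    have "continuous_on Y (\<lambda>b. (\<lambda>(a,b). f a b) (x, b))"
      by (rule continuous_on_compose2[OF fc2]) (auto intro!: continuous_intros simp: that)
    then show ?thesis by simp
  qed
  define ystar where "ystar x = (SOME y. y \<in> Y \<and> (\<forall>y'\<in>Y. f x y' \<le> f x y))" for x
  have ystar: "ystar x \<in> Y \<and> (\<forall>y'\<in>Y. f x y' \<le> f x (ystar x))" if "x \<in> X" for x
  proof -
    have "\<exists>y\<in>Y. \<forall>y'\<in>Y. f x y' \<le> f x y"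
      by (rule continuous_attains_sup[OF Y(2,3) fcont[OF that]])
    then show ?thesis unfolding ystar_def by (rule someI2_bex) auto
  qed
  have supeq: "(SUP y\<in>Y. f x y) = f x (ystar x)" if "x \<in> X" for x
    using ystar[OF that] by (intro cSup_eq_maximum) auto
  have QG: "\<mu> / 2 * (norm (y - ystar x))\<^sup>2 \<le> f x (ystar x) - f x y" if xX: "x \<in> X" and yY: "y \<in> Y" for x y
  proof -
    define A where "A = f x (ystar x) - f x y"
    define B where "B = \<mu> / 2 * (norm (y - ystar x))\<^sup>2"
    have ys: "ystar x \<in> Y" "\<forall>y'\<in>Y. f x y' \<le> f x (ystar x)" using ystar[OF xX] by auto
    have A0: "A \<ge> 0" using ys yY unfolding A_def by auto
    have key: "B - B * t \<le> A" if t: "0 < t" "t \<le> 1" for t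
    proof -
      have sc0: "\<forall>t::real. 0 \<le> t \<and> t \<le> 1 \<longrightarrow> f x ((1 - t) *\<^sub>R ystar x + t *\<^sub>R y) \<ge>
          (1 - t) * f x (ystar x) + t * f x y + \<mu> / 2 * t * (1 - t) * (norm (ystar x - y))\<^sup>2"
        using scv[OF xX] yY ys(1) unfolding strongly_concave_on_def by blast
      have 1: "f x ((1 - t) *\<^sub>R ystar x + t *\<^sub>R y) \<ge>
          (1 - t) * f x (ystar x) + t * f x y + \<mu> / 2 * t * (1 - t) * (norm (ystar x - y))\<^sup>2"
        using sc0 t by auto
      have 2: "f x ((1 - t) *\<^sub>R ystar x + t *\<^sub>R y) \<le> f x (ystar x)"
        using ys(2) convexD_alt[OF Y(1) ys(1) yY] t by auto
      have "t * (B - B * t) \<le> t * A"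
        using 1 2 unfolding A_def B_def by (simp add: norm_minus_commute algebra_simps) (simp add: field_simps)
      then show ?thesis using t by simp
    qed
    show ?thesis
    proof (rule ccontr)
      assume "\<not> ?thesis"
      then have BA: "B > A" unfolding A_def B_def by simp
      then have B0: "B > 0" using A0 by simp
      define t where "t = (B - A) / (2 * B)"
      have t: "0 < t" "t \<le> 1" unfolding t_def using BA B0 A0 by auto
      have "B * t = (B - A) / 2" unfolding t_def using B0 by simp
      then show False using key[OF t] BA by simp
    qed
  qed
  have Lip: "norm (ystar x' - ystar x) \<le> L / \<mu> * norm (x' - x)" if xx: "x \<in> X" "x' \<in> X" for x x'
  proof -
    define d where "d = norm (ystar x' - ystar x)"
    have ys: "ystar x \<in> Y" "ystar x' \<in> Y" using ystar xx by auto
    have 1: "\<mu> / 2 * d\<^sup>2 \<le> f x (ystar x) - f x (ystar x')"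
      using QG[OF xx(1) ys(2)] unfolding d_def .
    have 2: "\<mu> / 2 * d\<^sup>2 \<le> f x' (ystar x') - f x' (ystar x)"
      using QG[OF xx(2) ys(1)] unfolding d_def by (simp add: norm_minus_commute)
    have 3: "(f x' (ystar x') - f x (ystar x')) - (f x' (ystar x) - f x (ystar x)) \<le> L * d * norm (x' - x)"
      using mixed[OF xx ys(2) ys(1)] unfolding d_def .
    have "\<mu> * (d * d) \<le> (L * norm (x' - x)) * d" using 1 2 3 by (simp add: power2_eq_square algebra_simps)
    then have "\<mu> * d \<le> L * norm (x' - x)" if "d > 0"
      using that by (simp add: mult.assoc[symmetric] mult_le_cancel_right_pos)
    moreover have "d \<ge> 0" unfolding d_def by simp
    ultimately have "\<mu> * d \<le> L * norm (x' - x)" using L_pos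
      by (cases "d = 0") auto
    then show ?thesis unfolding d_def using mu_pos by (simp add: field_simps)
  qed
  define \<kappa> where "\<kappa> = L / \<mu>"
  define K where "K = real k"
  define \<gamma> where "\<gamma> = 3 / (real k + 2)"
  define \<alpha> where "\<alpha> = 6 * \<kappa> * L / (real k + 1)"
  define D where "D = diameter X"
  define \<zeta> where "\<zeta> = L * D\<^sup>2 / (384 * real k * (real k + 1))"
  define \<epsilon> where "\<epsilon> = \<kappa> * L * D\<^sup>2 / (real k * (real k + 1) * (real k + 2))"
  define ecgs where "ecgs = \<epsilon> / (64 * \<kappa>)"
  define emp where "emp = 4 * \<gamma> * sqrt (2 * \<kappa> * L * ecgs / \<alpha>\<^sup>2 + 2 * \<zeta> / \<alpha>)"
  define R where "R = nat \<lceil>log 2 (4 * D / emp)\<rceil>"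
  have "R \<ge> 1 \<and>
         (\<exists>xs ys vs. xs 0 = xh \<and>
            (\<forall>r\<in>{1..R}.
               ys r \<in> Y \<and> f (xs (r - 1)) (ys r) \<ge> (SUP y\<in>Y. f (xs (r - 1)) y) - ecgs \<and>
               cndg_output (gx z (ys r)) v \<alpha> \<zeta> X (vs r) \<and>
               xs r = (1 - \<gamma>) *\<^sub>R xh + \<gamma> *\<^sub>R vs r) \<and>
            (xR, yR, vR) = (xs R, ys R, vs R))"
    using run unfolding prox_step_output_def Let_def
    by (simp only: \<kappa>_def \<gamma>_def \<alpha>_def D_def \<zeta>_def \<epsilon>_def ecgs_def emp_def R_def)
  then obtain xs ys vs where R1: "R \<ge> 1" and x0: "xs 0 = xh"
    and step: "\<forall>r\<in>{1..R}.
               ys r \<in> Y \<and> f (xs (r - 1)) (ys r) \<ge> (SUP y\<in>Y. f (xs (r - 1)) y) - ecgs \<and>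
               cndg_output (gx z (ys r)) v \<alpha> \<zeta> X (vs r) \<and>
               xs r = (1 - \<gamma>) *\<^sub>R xh + \<gamma> *\<^sub>R vs r"
    and out0: "(xR, yR, vR) = (xs R, ys R, vs R)" by blast
  have out: "xR = xs R" "yR = ys R" using out0 by auto
  have goal_eq: "(L / \<mu>) * L * (diameter X)\<^sup>2 / (real k * (real k + 1) * (real k + 2)) = \<epsilon>"
    unfolding \<epsilon>_def \<kappa>_def D_def ..
  have kpos: "real k \<ge> 1" using k by simp
  have \<kappa>pos: "\<kappa> > 0" unfolding \<kappa>_def using L_pos mu_pos by simp
  have Lk: "L = \<kappa> * \<mu>" unfolding \<kappa>_def using mu_pos by simp
  have \<gamma>pos: "\<gamma> > 0" "\<gamma> \<le> 1" unfolding \<gamma>_def using kpos by auto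
  have \<alpha>pos: "\<alpha> > 0" unfolding \<alpha>_def using kpos \<kappa>pos L_pos by simp
  have bX: "bounded X" using X(2) compact_imp_bounded by blast
  have D0: "D \<ge> 0" unfolding D_def using diameter_ge_0[OF bX] .
  have Dpos: "D > 0"
  proof (rule ccontr)
    assume "\<not> D > 0"
    then have "D = 0" using D0 by simp
    then have "R = 0" unfolding R_def by (simp add: log_def)
    then show False using R1 by simp
  qed
  have \<zeta>pos: "\<zeta> > 0" unfolding \<zeta>_def using kpos L_pos Dpos by simp
  have \<epsilon>pos: "\<epsilon> > 0" unfolding \<epsilon>_def using kpos L_pos Dpos \<kappa>pos by simp
  have ecgspos: "ecgs > 0" unfolding ecgs_def using \<epsilon>pos \<kappa>pos by simp
  have stepr: "ys r \<in> Y" "f (xs (r - 1)) (ys r) \<ge> (SUP y\<in>Y. f (xs (r - 1)) y) - ecgs"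
      "cndg_output (gx z (ys r)) v \<alpha> \<zeta> X (vs r)" "xs r = (1 - \<gamma>) *\<^sub>R xh + \<gamma> *\<^sub>R vs r"
    if "1 \<le> r" "r \<le> R" for r
    using step that by auto
  have vsX: "vs r \<in> X \<and> (\<forall>u\<in>X. cndg_val (gx z (ys r)) v \<alpha> (vs r) u \<le> \<zeta>)"
    if "1 \<le> r" "r \<le> R" for r
    using cndg_props[OF stepr(3)[OF that] X(1) pts(3) \<alpha>pos \<zeta>pos] .
  have xsX: "xs r \<in> X" if "r \<le> R" for r
  proof (cases "r = 0")
    case True then show ?thesis using x0 pts by simp
  next
    case False
    then have r: "1 \<le> r" "r \<le> R" using that by auto
    show ?thesis unfolding stepr(4)[OF r]
      using convexD_alt[OF X(1) pts(1) conjunct1[OF vsX[OF r]]] \<gamma>pos by simp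
  qed
  define q where "q = sqrt (2 * ecgs / \<mu>)"
  have ydist: "norm (ys r - ystar (xs (r - 1))) \<le> q" if r: "1 \<le> r" "r \<le> R" for r
  proof -
    have xr: "xs (r - 1) \<in> X" using xsX r by simp
    have "\<mu> / 2 * (norm (ys r - ystar (xs (r - 1))))\<^sup>2 \<le> f (xs (r - 1)) (ystar (xs (r - 1))) - f (xs (r - 1)) (ys r)"
      by (rule QG[OF xr stepr(1)[OF r]])
    also have "\<dots> \<le> ecgs" using stepr(2)[OF r] supeq[OF xr] by simp
    finally have "(norm (ys r - ystar (xs (r - 1))))\<^sup>2 \<le> 2 * ecgs / \<mu>"
      using mu_pos by (simp add: field_simps)
    then show ?thesis unfolding q_def by (rule real_le_rsqrt)
  qed
  define c where "c = sqrt (2 * \<zeta> / \<alpha>)"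
  have vstab: "norm (vs r - vs r') \<le> L * norm (ys r - ys r') / \<alpha> + c"
    if r: "1 \<le> r" "r \<le> R" and r': "1 \<le> r'" "r' \<le> R" for r r'
  proof -
    define g1 where "g1 = gx z (ys r)"
    define g2 where "g2 = gx z (ys r')"
    define w where "w = vs r - vs r'"
    have v1: "vs r \<in> X" "\<forall>u\<in>X. cndg_val g1 v \<alpha> (vs r) u \<le> \<zeta>" using vsX[OF r] unfolding g1_def by auto
    have v2: "vs r' \<in> X" "\<forall>u\<in>X. cndg_val g2 v \<alpha> (vs r') u \<le> \<zeta>" using vsX[OF r'] unfolding g2_def by auto
    have s1: "inner (g1 + \<alpha> *\<^sub>R (vs r - v)) w \<le> \<zeta>" using v1(2) v2(1) unfolding cndg_val_def w_def by auto
    have s2: "inner (g2 + \<alpha> *\<^sub>R (vs r' - v)) (- w) \<le> \<zeta>" using v2(2) v1(1) unfolding cndg_val_def w_def by auto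
    have e: "inner (g1 + \<alpha> *\<^sub>R (vs r - v)) w + inner (g2 + \<alpha> *\<^sub>R (vs r' - v)) (- w)
        = inner (g1 - g2) w + \<alpha> * (norm w)\<^sup>2"
    proof -
      have "inner (g1 + \<alpha> *\<^sub>R (vs r - v)) w + inner (g2 + \<alpha> *\<^sub>R (vs r' - v)) (- w)
          = inner ((g1 + \<alpha> *\<^sub>R (vs r - v)) - (g2 + \<alpha> *\<^sub>R (vs r' - v))) w"
        by (simp add: inner_diff_left)
      also have "(g1 + \<alpha> *\<^sub>R (vs r - v)) - (g2 + \<alpha> *\<^sub>R (vs r' - v)) = (g1 - g2) + \<alpha> *\<^sub>R w"
        unfolding w_def by (simp add: algebra_simps)
      also have "inner ((g1 - g2) + \<alpha> *\<^sub>R w) w = inner (g1 - g2) w + \<alpha> * (norm w)\<^sup>2"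
        by (simp add: inner_add_left power2_norm_eq_inner)
      finally show ?thesis .
    qed
    have cs: "- (norm (g1 - g2) * norm w) \<le> inner (g1 - g2) w"
      using Cauchy_Schwarz_ineq2[of "g1 - g2" w] by linarith
    have "\<alpha> * (norm w)\<^sup>2 \<le> 2 * \<zeta> + norm (g1 - g2) * norm w"
      using s1 s2 e cs by linarith
    then have "norm w \<le> norm (g1 - g2) / \<alpha> + c"
      unfolding c_def using quad_bound[OF \<alpha>pos _ _ _] \<zeta>pos by simp
    also have "norm (g1 - g2) \<le> L * norm (ys r - ys r')"
      unfolding g1_def g2_def by (rule gxL[OF pts(2) stepr(1)[OF r] stepr(1)[OF r']])
    finally show ?thesis unfolding w_def using \<alpha>pos by (simp add: divide_right_mono)
  qed
  define d where "d r = norm (xs r - xs (r - 1))" for r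
  define B where "B = \<gamma> * (2 * L * q / \<alpha> + c)"
  have rho: "\<gamma> * L * \<kappa> / \<alpha> \<le> 1 / 2"
  proof -
    have "2 * (\<gamma> * L * \<kappa>) = (6 * \<kappa> * L) / (real k + 2)" unfolding \<gamma>_def by (simp add: field_simps)
    also have "\<dots> \<le> (6 * \<kappa> * L) / (real k + 1)"
      using \<kappa>pos L_pos by (intro frac_le) auto
    finally have "2 * (\<gamma> * L * \<kappa>) \<le> \<alpha>" unfolding \<alpha>_def .
    then show ?thesis using \<alpha>pos by (simp add: pos_divide_le_eq)
  qed
  have recur: "d (Suc r) \<le> d r / 2 + B" if r: "1 \<le> r" "r < R" for r
  proof -
    have r1: "1 \<le> Suc r" "Suc r \<le> R" using r by auto
    have r2: "1 \<le> r" "r \<le> R" using r by auto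
    have xr: "xs r \<in> X" "xs (r - 1) \<in> X" using xsX r by auto
    have "xs (Suc r) - xs r = \<gamma> *\<^sub>R (vs (Suc r) - vs r)"
      unfolding stepr(4)[OF r1] stepr(4)[OF r2] by (simp add: algebra_simps)
    then have "d (Suc r) = \<gamma> * norm (vs (Suc r) - vs r)" unfolding d_def using \<gamma>pos by simp
    also have "\<dots> \<le> \<gamma> * (L * norm (ys (Suc r) - ys r) / \<alpha> + c)"
      using vstab[OF r1 r2] \<gamma>pos by (simp add: mult_left_mono)
    also have "norm (ys (Suc r) - ys r) \<le> q + \<kappa> * d r + q"
    proof -
      have "norm (ys (Suc r) - ys r) \<le> norm (ys (Suc r) - ystar (xs r)) + norm (ystar (xs r) - ystar (xs (r - 1)))
           + norm (ystar (xs (r - 1)) - ys r)"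
        by (rule norm_diff_triangle_le[OF norm_diff_triangle_le[OF order.refl order.refl] order.refl])
      moreover have "norm (ys (Suc r) - ystar (xs r)) \<le> q" using ydist[OF r1] by simp
      moreover have "norm (ystar (xs r) - ystar (xs (r - 1))) \<le> \<kappa> * d r"
        using Lip[OF xr(2) xr(1)] unfolding \<kappa>_def d_def by simp
      moreover have "norm (ystar (xs (r - 1)) - ys r) \<le> q" using ydist[OF r2] by (simp add: norm_minus_commute)
      ultimately show ?thesis by linarith
    qed
    then have "\<gamma> * (L * norm (ys (Suc r) - ys r) / \<alpha> + c) \<le> \<gamma> * (L * (q + \<kappa> * d r + q) / \<alpha> + c)"
      using \<gamma>pos \<alpha>pos L_pos by (intro mult_left_mono add_right_mono divide_right_mono) auto
    also have "\<dots> = (\<gamma> * L * \<kappa> / \<alpha>) * d r + B" unfolding B_def using \<alpha>pos by (simp add: field_simps)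
    also have "\<dots> \<le> (1/2) * d r + B" using rho d_def by (intro add_right_mono mult_right_mono) auto
    finally show ?thesis by simp
  qed
  have q0: "q \<ge> 0" unfolding q_def using ecgspos mu_pos by simp
  have c0: "c \<ge> 0" unfolding c_def using \<zeta>pos \<alpha>pos by simp
  have B0: "B \<ge> 0" unfolding B_def using \<gamma>pos \<alpha>pos L_pos q0 c0 by simp
  have dind: "Suc n \<le> R \<longrightarrow> d (Suc n) \<le> (1/2)^n * D + 2 * B" for n
  proof (induction n)
    case 0
    have "d 1 \<le> D" unfolding d_def D_def
      using diameter_bounded_bound[OF bX xsX xsX, of 1 0] R1 by (simp add: dist_norm)
    then show ?case using B0 by simp
  next
    case (Suc n)
    show ?case
    proof
      assume a: "Suc (Suc n) \<le> R"
      have "d (Suc (Suc n)) \<le> d (Suc n) / 2 + B" using recur[of "Suc n"] a by simp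
      also have "\<dots> \<le> ((1/2)^n * D + 2 * B) / 2 + B" using Suc a by simp
      also have "\<dots> = (1/2)^(Suc n) * D + 2 * B" by simp
      finally show "d (Suc (Suc n)) \<le> (1/2)^(Suc n) * D + 2 * B" .
    qed
  qed
  have empos: "emp > 0"
  proof -
    have "2 * \<kappa> * L * ecgs / \<alpha>\<^sup>2 > 0" using \<kappa>pos L_pos ecgspos \<alpha>pos by simp
    moreover have "2 * \<zeta> / \<alpha> > 0" using \<zeta>pos \<alpha>pos by simp
    ultimately show ?thesis unfolding emp_def using \<gamma>pos by simp
  qed
  have pow: "2 ^ R \<ge> 4 * D / emp"
  proof -
    have "log 2 (4 * D / emp) \<le> real R" unfolding R_def by (rule real_nat_ceiling_ge)
    then have "2 powr log 2 (4 * D / emp) \<le> 2 powr real R" by simp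
    moreover have "2 powr log 2 (4 * D / emp) = 4 * D / emp" using Dpos empos by simp
    moreover have "2 powr real R = (2::real) ^ R" by (simp add: powr_realpow)
    ultimately show ?thesis by simp
  qed
  define \<delta> where "\<delta> = d R"
  have \<delta>0: "\<delta> \<ge> 0" unfolding \<delta>_def d_def by simp
  have \<delta>b: "\<delta> \<le> emp / 2 + 2 * B"
  proof -
    obtain n where n: "R = Suc n" using R1 by (cases R) auto
    have "\<delta> \<le> (1/2)^n * D + 2 * B" using dind[of n] n unfolding \<delta>_def by simp
    also have "(1/2)^n * D \<le> emp / 2"
    proof -
      have "(1/2::real)^n * D = 2 * D / 2 ^ R" unfolding n by (simp add: power_divide field_simps)
      also have "\<dots> \<le> 2 * D / (4 * D / emp)"
        using pow Dpos empos by (intro divide_left_mono) auto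
      also have "\<dots> = emp / 2" using Dpos empos by (simp add: field_simps)
      finally show ?thesis .
    qed
    finally show ?thesis by simp
  qed
  have k12: "real k + 1 > 0" "real k + 2 > 0" "real k > 0" using kpos by auto
  define M where "M = D\<^sup>2 / (1152 * \<kappa> * real k)"
  have M0: "M > 0" unfolding M_def using Dpos \<kappa>pos kpos by simp
  have qq: "q\<^sup>2 = 2 * ecgs / \<mu>" unfolding q_def using ecgspos mu_pos by simp
  have Lq: "(L * q / \<alpha>)\<^sup>2 = (\<kappa>*\<mu>)\<^sup>2 * (2 * ecgs / \<mu>) / \<alpha>\<^sup>2"
    by (simp add: power_divide power_mult_distrib qq Lk)
  have E1: "(L * q / \<alpha>)\<^sup>2 \<le> M"
  proof -
    have "(L * q / \<alpha>)\<^sup>2 = M * ((real k + 1) / (real k + 2))"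
      unfolding Lq unfolding ecgs_def \<epsilon>_def \<alpha>_def M_def Lk
      by (rule alg1) (use k12 \<kappa>pos mu_pos in auto)
    also have "\<dots> \<le> M * 1" using M0 k12 by (intro mult_left_mono) auto
    finally show ?thesis by simp
  qed
  have E2: "c\<^sup>2 = M"
  proof -
    have "c\<^sup>2 = 2 * \<zeta> / \<alpha>" unfolding c_def using \<zeta>pos \<alpha>pos by simp
    also have "\<dots> = M" unfolding \<zeta>_def \<alpha>_def M_def Lk
      by (rule alg2) (use k12 \<kappa>pos mu_pos in auto)
    finally show ?thesis .
  qed
  define m where "m = sqrt M"
  have m0: "m > 0" unfolding m_def using M0 by simp
  have Lqm: "L * q / \<alpha> \<le> m" unfolding m_def by (rule real_le_rsqrt[OF E1])
  have cm: "c = m" unfolding m_def using E2 c0 by (metis real_sqrt_abs abs_of_nonneg)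
  have empb: "emp \<le> 4 * \<gamma> * (3/2 * m)"
  proof -
    have "2 * \<kappa> * L * ecgs / \<alpha>\<^sup>2 = (L * q / \<alpha>)\<^sup>2"
      unfolding Lq unfolding Lk using alg3[OF mu_pos] by simp
    moreover have "2 * \<zeta> / \<alpha> = c\<^sup>2" unfolding c_def using \<zeta>pos \<alpha>pos by simp
    ultimately have "sqrt (2 * \<kappa> * L * ecgs / \<alpha>\<^sup>2 + 2 * \<zeta> / \<alpha>) \<le> sqrt (2 * M)"
      using E1 E2 by simp
    also have "sqrt (2 * M) \<le> 3/2 * m"
    proof -
      have "sqrt (2 * M) = sqrt 2 * m" unfolding m_def by (simp add: real_sqrt_mult)
      moreover have "sqrt 2 \<le> (3/2::real)" by (rule real_le_lsqrt) (auto simp: power2_eq_square)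
      ultimately show ?thesis using m0 by (simp add: mult_right_mono)
    qed
    finally show ?thesis unfolding emp_def using \<gamma>pos by (simp add: mult_left_mono)
  qed
  have Bb: "B \<le> 3 * \<gamma> * m"
  proof -
    have "2 * L * q / \<alpha> + c \<le> 3 * m" using Lqm cm by simp
    then show ?thesis unfolding B_def using \<gamma>pos by (simp add: mult_left_mono)
  qed
  have \<delta>b2: "\<delta> \<le> 9 * \<gamma> * m" using \<delta>b empb Bb by simp
  have \<delta>sq: "\<delta>\<^sup>2 \<le> 81 * \<gamma>\<^sup>2 * M"
  proof -
    have "\<delta>\<^sup>2 \<le> (9 * \<gamma> * m)\<^sup>2" using \<delta>b2 \<delta>0 by (simp add: power_mono)
    also have "\<dots> = 81 * \<gamma>\<^sup>2 * M" unfolding m_def using M0 by (simp add: power_mult_distrib)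
    finally show ?thesis .
  qed
  show ?thesis
  proof (cases "\<exists>y1\<in>Y. \<exists>y2\<in>Y. y1 \<noteq> y2")
    case False
    have yRY: "yR \<in> Y" using stepr(1)[of R] R1 out by simp
    then have "Y = {yR}" using False by auto
    then show ?thesis using \<epsilon>pos goal_eq by simp
  next
    case True
    then obtain y1 y2 where yy: "y1 \<in> Y" "y2 \<in> Y" "y1 \<noteq> y2" by blast
    have "\<mu> \<le> 2 * L" by (rule mu2L[OF pts(1) yy])
    then have \<kappa>h: "\<kappa> \<ge> 1/2" unfolding \<kappa>_def using mu_pos by (simp add: field_simps)
    define x where "x = xs (R - 1)"
    define x' where "x' = xs R"
    define y where "y = ys R"
    have R': "1 \<le> R" "R \<le> R" using R1 by auto
    have xX: "x \<in> X" "x' \<in> X" unfolding x_def x'_def using xsX by auto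
    have yY: "y \<in> Y" unfolding y_def using stepr(1)[OF R'] .
    define s where "s = norm (ystar x' - ystar x)"
    have ys'Y: "ystar x' \<in> Y" using ystar xX by auto
    have dR: "norm (x' - x) = \<delta>" unfolding \<delta>_def d_def x_def x'_def ..
    have h1: "(f x' (ystar x') - f x (ystar x')) - (f x' y - f x y) \<le> L * norm (ystar x' - y) * \<delta>"
      using mixed[OF xX ys'Y yY] unfolding dR .
    have h2: "\<mu> / 2 * s\<^sup>2 \<le> f x (ystar x) - f x (ystar x')"
      using QG[OF xX(1) ys'Y] unfolding s_def .
    have h3: "f x (ystar x) - f x y \<le> ecgs"
      using stepr(2)[OF R'] supeq[OF xX(1)] unfolding x_def y_def by simp
    have h4: "norm (ystar x' - y) \<le> s + q"
    proof -
      have "norm (ystar x - y) \<le> q" using ydist[OF R'] unfolding x_def y_def by (simp add: norm_minus_commute)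
      then show ?thesis unfolding s_def by (rule norm_diff_triangle_le[OF order.refl])
    qed
    have h4': "L * norm (ystar x' - y) * \<delta> \<le> L * \<delta> * s + L * \<delta> * q"
    proof -
      have "L * norm (ystar x' - y) * \<delta> \<le> L * (s + q) * \<delta>"
        using h4 L_pos \<delta>0 by (intro mult_right_mono mult_left_mono) auto
      then show ?thesis by (simp add: algebra_simps)
    qed
    have h5: "L * \<delta> * s - \<mu> / 2 * s\<^sup>2 \<le> \<kappa> * L * \<delta>\<^sup>2 / 2"
      unfolding Lk by (rule amgm1[OF mu_pos])
    have ecq: "ecgs = \<mu> * q\<^sup>2 / 2" using qq mu_pos by (simp add: field_simps)
    have h6: "L * \<delta> * q \<le> \<kappa> * L * \<delta>\<^sup>2 / 10 + 5 * ecgs"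
      unfolding ecq Lk by (rule amgm2[OF mu_pos])
    have phi: "f x' (ystar x') - f x' y \<le> 6 * ecgs + 3/5 * (\<kappa> * L * \<delta>\<^sup>2)"
      using h1 h2 h3 h4' h5 h6 by linarith
    have h7: "\<kappa> * L * \<delta>\<^sup>2 \<le> \<kappa> * L * (81 * \<gamma>\<^sup>2 * M)"
      using \<delta>sq \<kappa>pos L_pos by (intro mult_left_mono) auto
    have h8: "6 * ecgs + 3/5 * (\<kappa> * L * (81 * \<gamma>\<^sup>2 * M)) \<le> \<epsilon>"
      unfolding ecgs_def \<epsilon>_def \<gamma>_def M_def by (rule num) (use kpos \<kappa>h L_pos Dpos in auto)
    have "f x' (ystar x') - f x' y \<le> \<epsilon>" using phi h7 h8 by linarith
    then show ?thesis unfolding goal_eq out supeq[OF xX(2)[unfolded x'_def]]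
      unfolding x'_def[symmetric] y_def[symmetric] by simp
  qed
qed

end
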